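(* For each $h\in\{1,2\}$, let $\mathrm{oct}_h\in\mathbb{OCT}_n$ be a non-empty rational octagonal shape represented by the strongly closed octagonal graph $G_h=(\mathcal{N},w_h)$, and let $R_h$ be a subgraph of $G_h$ such that $\mathrm{S\text{-}closure}(R_h)=G_h$. Let $G_1\sqcup G_2=(\mathcal{N},w)$. Then $\mathrm{oct}_1\uplus\mathrm{oct}_2\neq\mathrm{oct}_1\cup\mathrm{oct}_2$ if and only if there exist an arc $(i,j)$ of $R_1$ and an arc $(k,\ell)$ of $R_2$ such that (1a) $w_1(i,j)<w_2(i,j)$; (1b) $w_2(k,\ell)<w_1(k,\ell)$; (2a) $w_1(i,j)+w_2(k,\ell)<w(i,\ell)+w(k,j)$; (2b) $w_1(i,j)+w_2(k,\ell)<w(i,\bar k)+w(\bar\jmath,\ell)$; (3a) $2w_1(i,j)+w_2(k,\ell)<w(i,\ell)+w(i,\bar k)+w(\bar\jmath,j)$; (3b) $2w_1(i,j)+w_2(k,\ell)<w(k,j)+w(\bar\jmath,\ell)+w(i,\bar\imath)$; (4a) $w_1(i,j)+2w_2(k,\ell)<w(i,\ell)+w(\bar\jmath,\ell)+w(k,\bar k)$; (4b) $w_1(i,j)+2w_2(k,\ell)<w(k,j)+w(i,\bar k)+w(\bar\ell,\ell)$.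
   Context: Let $\mathcal{N}=\{0,\dots,2n-1\}$; node $2s$ stands for $+x_{s+1}$ and node $2s+1$ for $-x_{s+1}$. For $i\in\mathcal{N}$, $\bar\imath=i+1$ if $i$ is even and $\bar\imath=i-1$ if $i$ is odd. For $\mathbf{v}\in\mathbb{R}^n$ let $\tilde\pi_{2s}(\mathbf{v})=v_{s+1}$ and $\tilde\pi_{2s+1}(\mathbf{v})=-v_{s+1}$. A graph is $(\mathcal{N},w)$ with $w:\mathcal{N}\times\mathcal{N}\to\mathbb{Q}\cup\{+\infty\}$ ($d<+\infty$, $d+(+\infty)=+\infty$); $(i,j)$ is an arc if $w(i,j)<+\infty$; it is consistent if no cycle has negative total weight; $G\unlhd G'$ iff $w\le w'$ pointwise. An octagonal graph is a consistent graph with $w(i,j)=w(\bar\jmath,\bar\imath)$ for all $i,j$. It is closed if $w(i,i)=0$ and $w(i,j)\le w(i,k)+w(k,j)$ for all $i,j,k$, and strongly closed if moreover $2w(i,j)\le w(i,\bar\imath)+w(\bar\jmath,j)$ for all $i,j$. $\mathrm{S\text{-}closure}(G)$ is the pointwise maximum of all strongly closed octagonal graphs $G'\unlhd G$. $R$ is a subgraph of $G$ if every arc of $R$ is an arc of $G$ with the same weight. A (rational) octagonal shape is a subset of $\mathbb{R}^n$ defined by finitely many constraints $\pm x_i\le b$, $\pm x_i\pm x_j\le b$ with $b\in\mathbb{Q}$; $\mathbb{OCT}_n$ is the set of them. An octagonal graph $G$ represents $\{\mathbf{x}\in\mathbb{R}^n : \tilde\pi_i(\mathbf{x})-\tilde\pi_j(\mathbf{x})\le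 w(i,j)\ \forall i,j\in\mathcal{N}\}$. $G_1\sqcup G_2=(\mathcal{N},\max(w_1,w_2))$ pointwise. $\mathrm{oct}_1\uplus\mathrm{oct}_2$ is the least octagonal shape containing $\mathrm{oct}_1\cup\mathrm{oct}_2$, represented by $G_1\sqcup G_2$. *)

theory Defs
  imports "HOL-Analysis.Analysis" "HOL-Library.FuncSet"
begin

text \<open>Nodes are the naturals 0..<2n; node 2s stands for +x_(s+1), node 2s+1 for -x_(s+1).
  Points of R^n are extensional functions on {0..<n} (coordinate s is x_(s+1)).\<close>

definition bar :: "nat \<Rightarrow> nat" where
  "bar i = (if even i then i + 1 else i - 1)"

definition pi_node :: "nat \<Rightarrow> (nat \<Rightarrow> real) \<Rightarrow> real" where
  "pi_node i v = (if even i then v (i div 2) else - v (i div 2))"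

type_synonym graph = "nat \<Rightarrow> nat \<Rightarrow> ereal"

definition nodes :: "nat \<Rightarrow> nat set" where
  "nodes n = {0..<2*n}"

definition Rn :: "nat \<Rightarrow> (nat \<Rightarrow> real) set" where
  "Rn n = PiE {0..<n} (\<lambda>_. UNIV)"

definition is_graph :: "nat \<Rightarrow> graph \<Rightarrow> bool" where
  "is_graph n w \<longleftrightarrow> (\<forall>i\<in>nodes n. \<forall>j\<in>nodes n.
      w i j = \<infinity> \<or> (\<exists>q::rat. w i j = ereal (of_rat q)))"

definition is_arc :: "graph \<Rightarrow> nat \<Rightarrow> nat \<Rightarrow> bool" where
  "is_arc w i j \<longleftrightarrow> w i j < \<infinity>"

definition cycle_weight :: "graph \<Rightarrow> nat list \<Rightarrow> ereal" where
  "cycle_weight w cs = sum_list (map (\<lambda>(a, b). w a b) (zip cs (tl cs @ [hd cs])))"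

definition consistent :: "nat \<Rightarrow> graph \<Rightarrow> bool" where
  "consistent n w \<longleftrightarrow> (\<forall>cs. cs \<noteq> [] \<and> set cs \<subseteq> nodes n \<longrightarrow> 0 \<le> cycle_weight w cs)"

definition graph_le :: "nat \<Rightarrow> graph \<Rightarrow> graph \<Rightarrow> bool" where
  "graph_le n w w' \<longleftrightarrow> (\<forall>i\<in>nodes n. \<forall>j\<in>nodes n. w i j \<le> w' i j)"

definition octagonal :: "nat \<Rightarrow> graph \<Rightarrow> bool" where
  "octagonal n w \<longleftrightarrow> is_graph n w \<and> consistent n w \<and>
     (\<forall>i\<in>nodes n. \<forall>j\<in>nodes n. w i j = w (bar j) (bar i))"

definition closed_graph :: "nat \<Rightarrow> graph \<Rightarrow> bool" where
  "closed_graph n w \<longleftrightarrow> (\<forall>i\<in>nodes n. w i i = 0) \<and>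
     (\<forall>i\<in>nodes n. \<forall>j\<in>nodes n. \<forall>k\<in>nodes n. w i j \<le> w i k + w k j)"

definition strongly_closed :: "nat \<Rightarrow> graph \<Rightarrow> bool" where
  "strongly_closed n w \<longleftrightarrow> closed_graph n w \<and>
     (\<forall>i\<in>nodes n. \<forall>j\<in>nodes n. 2 * w i j \<le> w i (bar i) + w (bar j) j)"

definition S_closure :: "nat \<Rightarrow> graph \<Rightarrow> graph" where
  "S_closure n w = (\<lambda>i j. SUP w' \<in> {w'. octagonal n w' \<and> strongly_closed n w' \<and> graph_le n w' w}. w' i j)"

definition subgraph :: "nat \<Rightarrow> graph \<Rightarrow> graph \<Rightarrow> bool" where
  "subgraph n r g \<longleftrightarrow> (\<forall>i\<in>nodes n. \<forall>j\<in>nodes n. is_arc r i j \<longrightarrow> is_arc g i j \<and> r i j = g i j)"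

definition gamma :: "nat \<Rightarrow> graph \<Rightarrow> (nat \<Rightarrow> real) set" where
  "gamma n w = {x \<in> Rn n. \<forall>i\<in>nodes n. \<forall>j\<in>nodes n. ereal (pi_node i x - pi_node j x) \<le> w i j}"

text \<open>Rational octagonal shapes: finitely many constraints pi_i(x) - pi_j(x) <= b with b rational
  (this covers +-x_i +- x_j <= b, and +-x_i <= b written as +-2x_i <= 2b).\<close>
definition oct_shape :: "nat \<Rightarrow> (nat \<Rightarrow> real) set \<Rightarrow> bool" where
  "oct_shape n S \<longleftrightarrow> (\<exists>C :: (nat \<times> nat \<times> rat) set. finite C \<and>
      (\<forall>(i, j, b)\<in>C. i \<in> nodes n \<and> j \<in> nodes n) \<and>
      S = {x \<in> Rn n. \<forall>(i, j, b)\<in>C. pi_node i x - pi_node j x \<le> of_rat b})"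

definition oct_hull :: "nat \<Rightarrow> (nat \<Rightarrow> real) set \<Rightarrow> (nat \<Rightarrow> real) set" where
  "oct_hull n A = \<Inter> {S. oct_shape n S \<and> A \<subseteq> S}"

definition graph_join :: "graph \<Rightarrow> graph \<Rightarrow> graph" where
  "graph_join w1 w2 = (\<lambda>i j. max (w1 i j) (w2 i j))"

end

theory Submission
  imports Defs
begin


lemma two_times: "(2::ereal) * x = x + x" by (cases x) auto

lemma bar_bar[simp]: "bar (bar i) = i" by (simp add: bar_def)

lemma bar_nodes: "i \<in> nodes n \<Longrightarrow> bar i \<in> nodes n"
  unfolding bar_def nodes_def by (auto elim!: oddE)

lemma pi_bar: "pi_node (bar i) x = - pi_node i x"
  unfolding pi_node_def bar_def by (auto elim!: oddE)

lemma ereal_diff_le: "ereal p \<le> t + ereal q \<Longrightarrow> ereal (p - q) \<le> t"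
  by (cases t) auto

lemma ereal_sum_ninf: "(a::ereal) \<noteq> -\<infinity> \<Longrightarrow> b \<noteq> -\<infinity> \<Longrightarrow> a + b \<noteq> -\<infinity>"
  by (cases a; cases b) auto

definition cl :: "nat \<Rightarrow> graph \<Rightarrow> bool" where
  "cl n g \<longleftrightarrow> (\<forall>x\<in>nodes n. g x x = 0) \<and> (\<forall>x\<in>nodes n. \<forall>y\<in>nodes n. g x y \<noteq> -\<infinity>) \<and>
     (\<forall>x\<in>nodes n. \<forall>y\<in>nodes n. \<forall>z\<in>nodes n. g x y \<le> g x z + g z y)"

definition addarc :: "graph \<Rightarrow> nat \<Rightarrow> nat \<Rightarrow> ereal \<Rightarrow> graph" where
  "addarc g s t c = (\<lambda>x y. min (g x y) (g x s + c + g t y))"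

lemma addarc_le: "addarc g s t c x y \<le> g x y" by (simp add: addarc_def)

lemma addarc_st: "cl n g \<Longrightarrow> s\<in>nodes n \<Longrightarrow> t\<in>nodes n \<Longrightarrow> addarc g s t c s t \<le> c"
  unfolding addarc_def cl_def by (simp add: min.coboundedI2)

lemma le_min_plus: "(m::ereal) \<le> a + c \<Longrightarrow> m \<le> a + d \<Longrightarrow> m \<le> b + c \<Longrightarrow> m \<le> b + d \<Longrightarrow> m \<le> min a b + min c d"
  by (simp add: min_def)

lemma addarc_cl:
  assumes g: "cl n g" and s: "s \<in> nodes n" and t: "t\<in>nodes n" and c: "c \<noteq> -\<infinity>" and pos: "0 \<le> g t s + c"
  shows "cl n (addarc g s t c)"
proof -
  have tri: "\<And>x y z. x\<in>nodes n \<Longrightarrow> y\<in>nodes n \<Longrightarrow> z\<in>nodes n \<Longrightarrow> g x y \<le> g x z + g z y"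
    using g by (auto simp: cl_def)
  have ninf: "\<And>x y. x\<in>nodes n \<Longrightarrow> y\<in>nodes n \<Longrightarrow> g x y \<noteq> -\<infinity>"
    using g by (auto simp: cl_def)
  have diag: "\<And>x. x\<in>nodes n \<Longrightarrow> g x x = 0" using g by (auto simp: cl_def)
  show ?thesis
    unfolding cl_def
  proof (intro conjI ballI)
    fix x assume x: "x \<in> nodes n"
    have "g t s \<le> g t x + g x s" using tri t s x by blast
    hence "g t s + c \<le> g t x + g x s + c" by (rule add_right_mono)
    also have "\<dots> = g x s + c + g t x" by (simp add: ac_simps)
    finally have "0 \<le> g x s + c + g t x" using pos by simp
    thus "addarc g s t c x x = 0" using diag[OF x] by (simp add: addarc_def)
  next
    fix x y assume x: "x \<in> nodes n" and y: "y \<in> nodes n"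
    show "addarc g s t c x y \<noteq> -\<infinity>"
      using ninf[OF x y] ninf[OF x s] ninf[OF t y] c
      by (simp add: addarc_def min_def ereal_sum_ninf)
  next
    fix x y z assume x: "x \<in> nodes n" and y: "y \<in> nodes n" and z: "z \<in> nodes n"
    let ?h = "addarc g s t c"
    have h1: "?h x y \<le> g x y" and h2: "?h x y \<le> g x s + c + g t y" by (simp_all add: addarc_def)
    show "?h x y \<le> ?h x z + ?h z y"
      unfolding addarc_def[of g s t c] 
    proof (rule le_min_plus)
      show "min (g x y) (g x s + c + g t y) \<le> g x z + g z y"
        using tri[OF x y z] by (simp add: min.coboundedI1)
    next
      have "g x s \<le> g x z + g z s" using tri x s z by blast
      hence "g x s + c + g t y \<le> g x z + g z s + c + g t y" by (intro add_right_mono)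
      also have "\<dots> = g x z + (g z s + c + g t y)" by (simp add: ac_simps)
      finally show "min (g x y) (g x s + c + g t y) \<le> g x z + (g z s + c + g t y)"
        by (simp add: min.coboundedI2)
    next
      have "g t y \<le> g t z + g z y" using tri t y z by blast
      hence "g x s + c + g t y \<le> g x s + c + (g t z + g z y)" by (intro add_left_mono)
      also have "\<dots> = g x s + c + g t z + g z y" by (simp add: ac_simps)
      finally show "min (g x y) (g x s + c + g t y) \<le> g x s + c + g t z + g z y"
        by (simp add: min.coboundedI2)
    next
      have "g t s \<le> g t z + g z s" using tri t s z by blast
      hence "0 \<le> g t z + g z s + c" using pos by (metis add_right_mono order_trans)
      hence "g x s + c + g t y + 0 \<le> g x s + c + g t y + (g t z + g z s + c)" by (intro add_left_mono)
      also have "\<dots> = g x s + c + g t z + (g z s + c + g t y)" by (simp add: ac_simps)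
      finally show "min (g x y) (g x s + c + g t y) \<le> g x s + c + g t z + (g z s + c + g t y)"
        by (simp add: min.coboundedI2)
    qed
  qed
qed


definition ratinf :: "ereal \<Rightarrow> bool" where
  "ratinf t \<longleftrightarrow> t = \<infinity> \<or> (\<exists>r\<in>\<rat>. t = ereal r)"

lemma potential:
  assumes g: "cl n g"
  shows "\<exists>P. (\<forall>x\<in>nodes n. \<forall>y\<in>nodes n. ereal (P x - P y) \<le> g x y) \<and>
     ((\<forall>x\<in>nodes n. \<forall>y\<in>nodes n. ratinf (g x y)) \<longrightarrow> (\<forall>x\<in>nodes n. P x \<in> \<rat>))"
proof -
  define M where "M x = Min (g x ` nodes n)" for x
  define P where "P x = real_of_ereal (M x)" for x
  have fin: "finite (nodes n)" by (simp add: nodes_def)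
  have Min_in: "M x \<in> g x ` nodes n" if "x \<in> nodes n" for x
    unfolding M_def using fin that by (intro Min_in) auto
  have Min_le: "M x \<le> g x a" if "a \<in> nodes n" for x a
    unfolding M_def using fin that by (intro Min_le) auto
  have MP: "M x = ereal (P x)" if x: "x \<in> nodes n" for x
  proof -
    have "M x \<le> 0" using Min_le[OF x, of x] g x by (simp add: cl_def)
    moreover have "M x \<noteq> -\<infinity>" using Min_in[OF x] g x unfolding cl_def by (metis imageE)
    ultimately show ?thesis unfolding P_def by (cases "M x") auto
  qed
  show ?thesis
  proof (intro exI conjI ballI impI)
    fix x y assume x: "x \<in> nodes n" and y: "y \<in> nodes n"
    obtain a where a: "a \<in> nodes n" and ya: "M y = g y a" using Min_in[OF y] by auto
    have "ereal (P x) \<le> g x a" using Min_le[OF a, of x] MP[OF x] by simp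
    also have "\<dots> \<le> g x y + g y a" using g x y a by (auto simp: cl_def)
    also have "\<dots> = g x y + ereal (P y)" using ya MP[OF y] by simp
    finally show "ereal (P x - P y) \<le> g x y" by (rule ereal_diff_le)
  next
    fix x assume r: "\<forall>x\<in>nodes n. \<forall>y\<in>nodes n. ratinf (g x y)" and x: "x \<in> nodes n"
    obtain a where a: "a \<in> nodes n" and xa: "M x = g x a" using Min_in[OF x] by auto
    have "ratinf (ereal (P x))" using r x a xa MP[OF x] by metis
    thus "P x \<in> \<rat>" by (simp add: ratinf_def)
  qed
qed

definition mkpt :: "nat \<Rightarrow> (nat \<Rightarrow> real) \<Rightarrow> nat \<Rightarrow> real" where
  "mkpt n p = (\<lambda>s. if s < n then p (2 * s) else undefined)"

lemma mkpt_Rn: "mkpt n p \<in> Rn n"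
  by (simp add: Rn_def PiE_def extensional_def mkpt_def)

lemma pi_mkpt:
  assumes v: "v \<in> nodes n" and sym: "\<And>v. p (bar v) = - p v"
  shows "pi_node v (mkpt n p) = p v"
proof (cases "even v")
  case True
  then show ?thesis using v by (auto simp: pi_node_def mkpt_def nodes_def elim!: evenE)
next
  case False
  then obtain k where k: "v = 2*k+1" by (auto elim!: oddE)
  have "bar v = 2*k" using k by (simp add: bar_def)
  hence "p (2*k) = - p v" using sym[of v] by simp
  thus ?thesis using v k by (simp add: pi_node_def mkpt_def nodes_def)
qed

lemma point_from_cl:
  assumes u: "cl n u"
  shows "\<exists>x\<in>Rn n. (\<forall>a\<in>nodes n. \<forall>b\<in>nodes n. \<forall>c1 c2. u a b \<le> ereal c1 \<longrightarrow> u (bar b) (bar a) \<le> ereal c2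
          \<longrightarrow> pi_node a x - pi_node b x \<le> (c1 + c2)/2) \<and>
     ((\<forall>a\<in>nodes n. \<forall>b\<in>nodes n. ratinf (u a b)) \<longrightarrow> (\<forall>a\<in>nodes n. pi_node a x \<in> \<rat>))"
proof -
  obtain P where P1: "\<forall>x\<in>nodes n. \<forall>y\<in>nodes n. ereal (P x - P y) \<le> u x y"
    and P2: "(\<forall>x\<in>nodes n. \<forall>y\<in>nodes n. ratinf (u x y)) \<longrightarrow> (\<forall>x\<in>nodes n. P x \<in> \<rat>)"
    using potential[OF u] by blast
  define p where "p v = (P v - P (bar v))/2" for v
  have sym: "p (bar v) = - p v" for v unfolding p_def by (simp add: field_simps)
  have pi: "pi_node v (mkpt n p) = p v" if "v \<in> nodes n" for v by (rule pi_mkpt[where p=p, OF that sym])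
  show ?thesis
  proof (intro bexI[OF _ mkpt_Rn] conjI ballI allI impI)
    fix a b c1 c2 assume a: "a \<in> nodes n" and b: "b \<in> nodes n"
      and c1: "u a b \<le> ereal c1" and c2: "u (bar b) (bar a) \<le> ereal c2"
    have "ereal (P a - P b) \<le> ereal c1" using P1 a b c1 order_trans by blast
    moreover have "ereal (P (bar b) - P (bar a)) \<le> ereal c2"
      using P1 bar_nodes[OF a] bar_nodes[OF b] c2 order_trans by blast
    ultimately show "pi_node a (mkpt n p) - pi_node b (mkpt n p) \<le> (c1 + c2)/2"
      using pi[OF a] pi[OF b] by (simp add: p_def)
  next
    fix a assume r: "\<forall>a\<in>nodes n. \<forall>b\<in>nodes n. ratinf (u a b)" and a: "a \<in> nodes n"
    have "P a \<in> \<rat>" "P (bar a) \<in> \<rat>" using P2 r a bar_nodes[OF a] by auto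
    hence "(P a - P (bar a)) / 2 \<in> \<rat>" by (intro Rats_divide Rats_diff) auto
    thus "pi_node a (mkpt n p) \<in> \<rat>" unfolding pi[OF a] p_def .
  qed
qed


definition coh :: "nat \<Rightarrow> graph \<Rightarrow> bool" where
  "coh n w \<longleftrightarrow> (\<forall>i\<in>nodes n. \<forall>j\<in>nodes n. w i j = w (bar j) (bar i))"

lemma point_in_gamma:
  assumes u: "cl n u" and le: "\<forall>a\<in>nodes n. \<forall>b\<in>nodes n. u a b \<le> w a b" and w: "coh n w"
  shows "\<exists>p\<in>gamma n w. \<forall>a\<in>nodes n. \<forall>b\<in>nodes n. \<forall>c. u a b \<le> ereal c \<longrightarrow> u (bar b) (bar a) \<le> ereal c
       \<longrightarrow> pi_node a p - pi_node b p \<le> c"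
proof -
  obtain x where x: "x \<in> Rn n" and H: "\<forall>a\<in>nodes n. \<forall>b\<in>nodes n. \<forall>c1 c2. u a b \<le> ereal c1 \<longrightarrow> u (bar b) (bar a) \<le> ereal c2
          \<longrightarrow> pi_node a x - pi_node b x \<le> (c1 + c2)/2"
    using point_from_cl[OF u] by blast
  have H2: "pi_node a x - pi_node b x \<le> c" if "a\<in>nodes n" "b\<in>nodes n" "u a b \<le> ereal c" "u (bar b) (bar a) \<le> ereal c" for a b c
    using H that by fastforce
  have "x \<in> gamma n w"
    unfolding gamma_def
  proof (intro CollectI conjI x ballI)
    fix a b assume a: "a \<in> nodes n" and b: "b \<in> nodes n"
    show "ereal (pi_node a x - pi_node b x) \<le> w a b"
    proof (cases "w a b")
      case (real r)
      have "u a b \<le> ereal r" using le a b real by metis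
      moreover have "u (bar b) (bar a) \<le> ereal r" using le bar_nodes[OF a] bar_nodes[OF b] real w a b
        unfolding coh_def by metis
      ultimately show ?thesis using H2[OF a b] real by simp
    next
      case MInf
      hence "u a b \<le> -\<infinity>" using le a b by metis
      hence "u a b = -\<infinity>" by simp
      thus ?thesis using u a b by (simp add: cl_def)
    qed auto
  qed
  thus ?thesis using H2 by blast
qed

lemma ereal_shift: "ereal (a + b) \<le> x \<Longrightarrow> ereal a \<le> x + ereal (-b)"
  by (cases x) auto

lemma tight:
  assumes cw: "cl n w" and coh: "coh n w"
    and strong: "\<forall>i\<in>nodes n. \<forall>j\<in>nodes n. 2 * w i j \<le> w i (bar i) + w (bar j) j"
    and i: "i \<in> nodes n" and j: "j \<in> nodes n" and lt: "ereal b < w i j"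
  shows "\<exists>p\<in>gamma n w. b < pi_node i p - pi_node j p"
proof -
  define c where "c = (if w i j = \<infinity> then b + 1 else real_of_ereal (w i j))"
  have cw1: "ereal c \<le> w i j" and bc: "b < c"
    using lt cw i j unfolding c_def cl_def by (cases "w i j"; auto)+
  define u1 where "u1 = addarc w j i (ereal (-c))"
  have "0 \<le> w i j + ereal (-c)" using ereal_shift[of 0 c "w i j"] cw1 by (simp add: zero_ereal_def)
  hence cu1: "cl n u1" unfolding u1_def by (intro addarc_cl[OF cw j i]) auto
  define u2 where "u2 = addarc u1 (bar i) (bar j) (ereal (-c))"
  have "2 * ereal c \<le> 2 * w i j" unfolding two_times using add_mono[OF cw1 cw1] .
  also have "\<dots> \<le> w i (bar i) + w (bar j) j" using strong i j by blast
  finally have S0: "2 * ereal c \<le> w i (bar i) + w (bar j) j" .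
  have "ereal (c + c) = 2 * ereal c" by (simp add: two_times)
  with S0 have S: "ereal (c + c) \<le> w (bar j) j + w i (bar i)" by (simp add: add.commute)
  have A0: "ereal c \<le> (w (bar j) j + w i (bar i)) + ereal (-c)" by (rule ereal_shift[OF S])
  have "(w (bar j) j + w i (bar i)) + ereal (-c) = w (bar j) j + ereal (-c) + w i (bar i)"
    by (simp add: ac_simps)
  with A0 have A: "ereal c \<le> w (bar j) j + ereal (-c) + w i (bar i)" by simp
  have B: "ereal c \<le> w (bar j) (bar i)" using cw1 coh i j unfolding coh_def by metis
  have "ereal c \<le> u1 (bar j) (bar i)" using A B by (simp add: u1_def addarc_def)
  hence "0 \<le> u1 (bar j) (bar i) + ereal (-c)" using ereal_shift[of 0 c] by (simp add: zero_ereal_def)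
  hence cu2: "cl n u2" unfolding u2_def by (intro addarc_cl[OF cu1 bar_nodes[OF i] bar_nodes[OF j]]) auto
  have le: "\<forall>a\<in>nodes n. \<forall>b\<in>nodes n. u2 a b \<le> w a b"
    unfolding u2_def u1_def by (meson addarc_le order_trans)
  obtain p where p: "p \<in> gamma n w" and H: "\<forall>a\<in>nodes n. \<forall>b\<in>nodes n. \<forall>c. u2 a b \<le> ereal c \<longrightarrow> u2 (bar b) (bar a) \<le> ereal c
       \<longrightarrow> pi_node a p - pi_node b p \<le> c"
    using point_in_gamma[OF cu2 le coh] by blast
  have "u2 j i \<le> ereal (-c)" using addarc_st[OF cw j i, of "ereal (-c)"] addarc_le[of u1 "bar i" "bar j" "ereal (-c)" j i]
    unfolding u2_def u1_def by simp
  moreover have "u2 (bar i) (bar j) \<le> ereal (-c)" unfolding u2_def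
    by (rule addarc_st[OF cu1 bar_nodes[OF i] bar_nodes[OF j]])
  ultimately have "pi_node j p - pi_node i p \<le> -c" using H i j by simp
  thus ?thesis using p bc by (intro bexI[of _ p]) auto
qed


lemma path_ge:
  assumes g: "cl n g"
  shows "set (a # xs @ [b]) \<subseteq> nodes n \<Longrightarrow> g a b \<le> sum_list (map (\<lambda>(x,y). g x y) (zip (a # xs) (xs @ [b])))"
proof (induction xs arbitrary: a)
  case Nil
  then show ?case by simp
next
  case (Cons y ys)
  have IH: "g y b \<le> sum_list (map (\<lambda>(x,y). g x y) (zip (y # ys) (ys @ [b])))"
    using Cons by auto
  have "g a b \<le> g a y + g y b" using g Cons.prems by (auto simp: cl_def)
  also have "\<dots> \<le> g a y + sum_list (map (\<lambda>(x,y). g x y) (zip (y # ys) (ys @ [b])))"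
    using IH by (rule add_left_mono)
  finally show ?case by simp
qed

lemma cl_consistent: assumes g: "cl n g" shows "consistent n g"
  unfolding consistent_def
proof (intro allI impI)
  fix cs assume h: "cs \<noteq> [] \<and> set cs \<subseteq> nodes n"
  then obtain c cs' where cs: "cs = c # cs'" by (cases cs) auto
  have "g c c \<le> sum_list (map (\<lambda>(x,y). g x y) (zip (c # cs') (cs' @ [c])))"
    using h cs by (intro path_ge[OF g]) auto
  moreover have "g c c = 0" using g h cs by (auto simp: cl_def)
  ultimately show "0 \<le> cycle_weight g cs" using cs by (simp add: cycle_weight_def)
qed

definition scl :: "nat \<Rightarrow> graph \<Rightarrow> bool" where
  "scl n w \<longleftrightarrow> cl n w \<and> coh n w \<and> (\<forall>i\<in>nodes n. \<forall>j\<in>nodes n. 2 * w i j \<le> w i (bar i) + w (bar j) j)"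

lemma scl_of: assumes "octagonal n w" "strongly_closed n w" shows "scl n w"
proof -
  have "\<forall>i\<in>nodes n. \<forall>j\<in>nodes n. w i j \<noteq> -\<infinity>"
  proof (intro ballI)
    fix i j assume "i \<in> nodes n" "j \<in> nodes n"
    hence "w i j = \<infinity> \<or> (\<exists>q::rat. w i j = ereal (of_rat q))"
      using assms(1) unfolding octagonal_def is_graph_def by blast
    thus "w i j \<noteq> -\<infinity>" by auto
  qed
  then show ?thesis using assms unfolding scl_def cl_def coh_def octagonal_def strongly_closed_def closed_graph_def
    by blast
qed

lemma ratinf_graph: "is_graph n w \<longleftrightarrow> (\<forall>i\<in>nodes n. \<forall>j\<in>nodes n. ratinf (w i j))"
  unfolding is_graph_def ratinf_def Rats_def by auto

lemma oct_of_scl: assumes "scl n w" "\<forall>i\<in>nodes n. \<forall>j\<in>nodes n. ratinf (w i j)"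
  shows "octagonal n w \<and> strongly_closed n w"
proof -
  have "cl n w" using assms(1) by (simp add: scl_def)
  hence "consistent n w" by (rule cl_consistent)
  thus ?thesis using assms
  unfolding scl_def octagonal_def strongly_closed_def closed_graph_def ratinf_graph coh_def cl_def
  by blast
qed

lemma ratinf_max: "ratinf a \<Longrightarrow> ratinf b \<Longrightarrow> ratinf (max a b)"
  by (simp add: max_def)

lemma max_sum_le: "(a::ereal) \<le> c + e \<Longrightarrow> b \<le> d + f \<Longrightarrow> max a b \<le> max c d + max e f"
proof -
  assume h: "a \<le> c + e" "b \<le> d + f"
  have "c + e \<le> max c d + max e f" "d + f \<le> max c d + max e f" by (intro add_mono; simp)+
  thus ?thesis using h by (meson max.boundedI order_trans)
qed

lemma two_max: "2 * max (a::ereal) b = max (2*a) (2*b)"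
  by (cases a; cases b) (auto simp: max_def)

lemma scl_max: assumes "scl n w1" "scl n w2" shows "scl n (\<lambda>i j. max (w1 i j) (w2 i j))"
  unfolding scl_def cl_def coh_def
proof (intro conjI ballI)
  fix i j assume i: "i \<in> nodes n" and j: "j \<in> nodes n"
  show "2 * max (w1 i j) (w2 i j) \<le> max (w1 i (bar i)) (w2 i (bar i)) + max (w1 (bar j) j) (w2 (bar j) j)"
    unfolding two_max using assms i j by (intro max_sum_le) (auto simp: scl_def)
  show "max (w1 i j) (w2 i j) = max (w1 (bar j) (bar i)) (w2 (bar j) (bar i))"
    using assms i j by (auto simp: scl_def coh_def)
  show "max (w1 i j) (w2 i j) \<noteq> - \<infinity>" using assms i j by (auto simp: scl_def cl_def max_def)
next
  fix i assume i: "i \<in> nodes n"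
  show "max (w1 i i) (w2 i i) = 0" using assms i by (auto simp: scl_def cl_def)
next
  fix x y z assume "x \<in> nodes n" "y \<in> nodes n" "z \<in> nodes n"
  thus "max (w1 x y) (w2 x y) \<le> max (w1 x z) (w2 x z) + max (w1 z y) (w2 z y)"
    using assms by (intro max_sum_le) (auto simp: scl_def cl_def)
qed




lemma gamma_shape:
  assumes r: "\<forall>i\<in>nodes n. \<forall>j\<in>nodes n. ratinf (w i j)"
  shows "oct_shape n (gamma n w)"
proof -
  define Q where "Q i j = (SOME q. w i j = ereal (of_rat q))" for i j
  define D where "D = {(i,j). i \<in> nodes n \<and> j \<in> nodes n \<and> w i j \<noteq> \<infinity>}"
  define C where "C = (\<lambda>(i,j). (i, j, Q i j)) ` D"
  have wQ: "w i j = ereal (of_rat (Q i j))" if "(i,j) \<in> D" for i j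
  proof -
    have "\<exists>q. w i j = ereal (of_rat q)" using r that unfolding D_def ratinf_def Rats_def by auto
    thus ?thesis unfolding Q_def by (rule someI_ex)
  qed
  have finD: "finite D"
    by (rule finite_subset[of _ "nodes n \<times> nodes n"]) (auto simp: D_def nodes_def)
  show ?thesis unfolding oct_shape_def
  proof (intro exI[of _ C] conjI)
    show "finite C" unfolding C_def using finD by simp
    show "\<forall>(i, j, b)\<in>C. i \<in> nodes n \<and> j \<in> nodes n" unfolding C_def D_def by auto
    show "gamma n w = {x \<in> Rn n. \<forall>(i, j, b)\<in>C. pi_node i x - pi_node j x \<le> real_of_rat b}"
    proof (intro set_eqI iffI)
      fix x assume x: "x \<in> gamma n w"
      show "x \<in> {x \<in> Rn n. \<forall>(i, j, b)\<in>C. pi_node i x - pi_node j x \<le> real_of_rat b}"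
      proof (intro CollectI conjI ballI)
        show "x \<in> Rn n" using x by (simp add: gamma_def)
        fix t assume "t \<in> C"
        then obtain i j where ij: "(i,j) \<in> D" and t: "t = (i, j, Q i j)" unfolding C_def by auto
        have "ereal (pi_node i x - pi_node j x) \<le> w i j" using x ij by (auto simp: gamma_def D_def)
        thus "case t of (i, j, b) \<Rightarrow> pi_node i x - pi_node j x \<le> real_of_rat b"
          using wQ[OF ij] t by simp
      qed
    next
      fix x assume x: "x \<in> {x \<in> Rn n. \<forall>(i, j, b)\<in>C. pi_node i x - pi_node j x \<le> real_of_rat b}"
      show "x \<in> gamma n w" unfolding gamma_def
      proof (intro CollectI conjI ballI)
        show "x \<in> Rn n" using x by simp
        fix i j assume i: "i \<in> nodes n" and j: "j \<in> nodes n"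
        show "ereal (pi_node i x - pi_node j x) \<le> w i j"
        proof (cases "w i j = \<infinity>")
          case False
          hence ij: "(i,j) \<in> D" using i j by (simp add: D_def)
          hence "(i, j, Q i j) \<in> C" unfolding C_def by force
          hence "pi_node i x - pi_node j x \<le> real_of_rat (Q i j)" using x by auto
          thus ?thesis using wQ[OF ij] by simp
        qed simp
      qed
    qed
  qed
qed

lemma hull_sub: "oct_shape n S \<Longrightarrow> A \<subseteq> S \<Longrightarrow> oct_hull n A \<subseteq> S"
  by (auto simp: oct_hull_def)

lemma sub_hull: "A \<subseteq> oct_hull n A"
  by (auto simp: oct_hull_def)

lemma bound_of_shape:
  assumes s: "scl n w1" and S: "{x \<in> Rn n. \<forall>(i, j, b)\<in>C. pi_node i x - pi_node j x \<le> real_of_rat b} \<supseteq> gamma n w1"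
    and ijb: "(i,j,b) \<in> C" and i: "i \<in> nodes n" and j: "j \<in> nodes n"
  shows "w1 i j \<le> ereal (of_rat b)"
proof (rule ccontr)
  assume "\<not> w1 i j \<le> ereal (of_rat b)"
  hence "ereal (of_rat b) < w1 i j" by simp
  then obtain p where p: "p \<in> gamma n w1" and lt: "of_rat b < pi_node i p - pi_node j p"
    using tight[of n w1 i j] s i j unfolding scl_def by blast
  have "pi_node i p - pi_node j p \<le> of_rat b" using S p ijb by blast
  thus False using lt by simp
qed

lemma gamma_hull:
  assumes s1: "scl n w1" and s2: "scl n w2" and x: "x \<in> gamma n (\<lambda>i j. max (w1 i j) (w2 i j))"
  shows "x \<in> oct_hull n (gamma n w1 \<union> gamma n w2)"
  unfolding oct_hull_def
proof (intro InterI, elim CollectE conjE)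
  fix S assume sh: "oct_shape n S" and sub: "gamma n w1 \<union> gamma n w2 \<subseteq> S"
  then obtain C where fin: "finite C" and Cn: "\<forall>(i, j, b)\<in>C. i \<in> nodes n \<and> j \<in> nodes n"
    and SC: "S = {x \<in> Rn n. \<forall>(i, j, b)\<in>C. pi_node i x - pi_node j x \<le> real_of_rat b}"
    unfolding oct_shape_def by blast
  show "x \<in> S" unfolding SC
  proof (intro CollectI conjI ballI)
    show "x \<in> Rn n" using x by (simp add: gamma_def)
    fix t assume t: "t \<in> C"
    obtain i j b where ijb: "t = (i,j,b)" by (cases t)
    have i: "i \<in> nodes n" and j: "j \<in> nodes n" using Cn t ijb by auto
    have "w1 i j \<le> ereal (of_rat b)"
      using bound_of_shape[OF s1 _ t[unfolded ijb] i j] sub SC by blast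
    moreover have "w2 i j \<le> ereal (of_rat b)"
      using bound_of_shape[OF s2 _ t[unfolded ijb] i j] sub SC by blast
    moreover have "ereal (pi_node i x - pi_node j x) \<le> max (w1 i j) (w2 i j)"
      using x i j by (simp add: gamma_def)
    ultimately have "ereal (pi_node i x - pi_node j x) \<le> ereal (of_rat b)"
      by (meson max.bounded_iff order_trans)
    thus "case t of (i, j, b) \<Rightarrow> pi_node i x - pi_node j x \<le> real_of_rat b"
      using ijb by simp
  qed
qed


lemma ratinf_add: "ratinf a \<Longrightarrow> ratinf b \<Longrightarrow> ratinf (a + b)"
  unfolding ratinf_def by (auto intro: Rats_add)

lemma ratinf_min: "ratinf a \<Longrightarrow> ratinf b \<Longrightarrow> ratinf (min a b)"
  by (simp add: min_def)

lemma ratinf_ninf: "ratinf a \<Longrightarrow> a \<noteq> -\<infinity>"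
  unfolding ratinf_def by auto

definition addall :: "graph \<Rightarrow> (nat \<times> nat \<times> ereal) list \<Rightarrow> graph" where
  "addall g L = foldl (\<lambda>h (s,t,c). addarc h s t c) g L"

lemma addall:
  assumes "cl n g" "\<forall>a\<in>nodes n. \<forall>b\<in>nodes n. ratinf (g a b)"
    "\<forall>a\<in>nodes n. \<forall>b\<in>nodes n. ereal (pi_node a z - pi_node b z) \<le> g a b"
    "\<forall>(s,t,c)\<in>set L. s\<in>nodes n \<and> t \<in> nodes n \<and> ratinf c \<and> ereal (pi_node s z - pi_node t z) \<le> c"
  shows "cl n (addall g L) \<and> (\<forall>a\<in>nodes n. \<forall>b\<in>nodes n. ratinf (addall g L a b)) \<and>
    (\<forall>a\<in>nodes n. \<forall>b\<in>nodes n. ereal (pi_node a z - pi_node b z) \<le> addall g L a b) \<and>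
    (\<forall>a\<in>nodes n. \<forall>b\<in>nodes n. addall g L a b \<le> g a b) \<and> (\<forall>(s,t,c)\<in>set L. addall g L s t \<le> c)"
  using assms
proof (induction L arbitrary: g)
  case Nil
  then show ?case by (simp add: addall_def)
next
  case (Cons e L)
  obtain s t c where e: "e = (s,t,c)" by (cases e)
  have s: "s \<in> nodes n" and t: "t \<in> nodes n" and rc: "ratinf c"
    and zc: "ereal (pi_node s z - pi_node t z) \<le> c" using Cons.prems(4) e by auto
  define g' where "g' = addarc g s t c"
  have eq: "addall g (e # L) = addall g' L" by (simp add: addall_def e g'_def)
  have "ereal (pi_node t z - pi_node s z) + ereal (pi_node s z - pi_node t z) \<le> g t s + c"
    using Cons.prems(3) s t zc by (intro add_mono) auto
  hence pos: "0 \<le> g t s + c" by (simp add: zero_ereal_def)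
  have cg': "cl n g'" unfolding g'_def using Cons.prems(1) s t ratinf_ninf[OF rc] pos by (rule addarc_cl)
  have rg': "\<forall>a\<in>nodes n. \<forall>b\<in>nodes n. ratinf (g' a b)"
    using Cons.prems(2) s t rc by (auto simp: g'_def addarc_def intro!: ratinf_min ratinf_add)
  have zg': "\<forall>a\<in>nodes n. \<forall>b\<in>nodes n. ereal (pi_node a z - pi_node b z) \<le> g' a b"
  proof (intro ballI)
    fix a b assume a: "a \<in> nodes n" and b: "b \<in> nodes n"
    have "ereal (pi_node a z - pi_node s z) + ereal (pi_node s z - pi_node t z) + ereal (pi_node t z - pi_node b z)
        \<le> g a s + c + g t b"
      using Cons.prems(3) a b s t zc by (intro add_mono) auto
    hence "ereal (pi_node a z - pi_node b z) \<le> g a s + c + g t b" by simp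
    moreover have "ereal (pi_node a z - pi_node b z) \<le> g a b" using Cons.prems(3) a b by auto
    ultimately show "ereal (pi_node a z - pi_node b z) \<le> g' a b" by (simp add: g'_def addarc_def)
  qed
  have IH: "cl n (addall g' L) \<and> (\<forall>a\<in>nodes n. \<forall>b\<in>nodes n. ratinf (addall g' L a b)) \<and>
    (\<forall>a\<in>nodes n. \<forall>b\<in>nodes n. ereal (pi_node a z - pi_node b z) \<le> addall g' L a b) \<and>
    (\<forall>a\<in>nodes n. \<forall>b\<in>nodes n. addall g' L a b \<le> g' a b) \<and> (\<forall>(s,t,c)\<in>set L. addall g' L s t \<le> c)"
    using Cons.IH[OF cg' rg' zg'] Cons.prems(4) by auto
  have "addall g' L s t \<le> c"
    using IH s t addarc_st[OF Cons.prems(1) s t, of c] unfolding g'_def by (meson order_trans)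
  moreover have "\<forall>a\<in>nodes n. \<forall>b\<in>nodes n. addall g' L a b \<le> g a b"
    using IH addarc_le unfolding g'_def by (meson order_trans)
  ultimately show ?case using IH eq e by auto
qed

definition dg :: "(nat \<Rightarrow> real) \<Rightarrow> graph" where
  "dg y = (\<lambda>a b. ereal (pi_node a y - pi_node b y))"

lemma scl_dg: "scl n (dg y)"
  unfolding scl_def cl_def coh_def dg_def
proof (intro conjI ballI)
  fix i j assume "i \<in> nodes n" "j \<in> nodes n"
  show "2 * ereal (pi_node i y - pi_node j y) \<le> ereal (pi_node i y - pi_node (bar i) y) + ereal (pi_node (bar j) y - pi_node j y)"
    by (simp add: pi_bar)
  show "ereal (pi_node i y - pi_node j y) = ereal (pi_node (bar j) y - pi_node (bar i) y)"
    by (simp add: pi_bar)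
qed auto

lemma gamma_r:
  assumes s1: "scl n w1" and rw: "\<forall>i\<in>nodes n. \<forall>j\<in>nodes n. ratinf (w1 i j)"
    and sub: "subgraph n r w1" and SC: "\<forall>i\<in>nodes n. \<forall>j\<in>nodes n. S_closure n r i j = w1 i j"
    and z: "z \<in> gamma n r"
  shows "z \<in> gamma n w1"
proof (rule ccontr)
  assume nz: "z \<notin> gamma n w1"
  have zR: "z \<in> Rn n" using z by (simp add: gamma_def)
  then obtain i0 j0 where i0: "i0 \<in> nodes n" and j0: "j0 \<in> nodes n"
    and viol: "\<not> ereal (pi_node i0 z - pi_node j0 z) \<le> w1 i0 j0"
    using nz unfolding gamma_def by auto
  define d0 where "d0 = pi_node i0 z - pi_node j0 z"
  obtain v where v: "w1 i0 j0 = ereal v"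
    using viol s1 i0 j0 unfolding scl_def cl_def by (cases "w1 i0 j0") auto
  have vd: "v < d0" using viol v d0_def by simp
  obtain q where q: "q \<in> \<rat>" "v < q" "q < d0" using Rats_dense_in_real[OF vd] by blast
  have rr: "ratinf (r a b) \<and> w1 a b \<le> r a b" if "a \<in> nodes n" "b \<in> nodes n" for a b
  proof (cases "is_arc r a b")
    case True
    then show ?thesis using sub that rw unfolding subgraph_def by auto
  next
    case False
    then show ?thesis unfolding is_arc_def ratinf_def by auto
  qed
  have zr: "ereal (pi_node a z - pi_node b z) \<le> r a b" if "a \<in> nodes n" "b \<in> nodes n" for a b
    using z that by (simp add: gamma_def)
  define r' where "r' a b = min (r a b) (r (bar b) (bar a))" for a b
  have r'coh: "r' (bar b) (bar a) = r' a b" for a b by (simp add: r'_def min.commute)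
  have zr': "ereal (pi_node a z - pi_node b z) \<le> r' a b" if "a \<in> nodes n" "b \<in> nodes n" for a b
  proof -
    have "ereal (pi_node (bar b) z - pi_node (bar a) z) \<le> r (bar b) (bar a)"
      using zr bar_nodes that by blast
    thus ?thesis using zr[OF that] unfolding r'_def by (simp add: pi_bar)
  qed
  have rr': "ratinf (r' a b)" if "a \<in> nodes n" "b \<in> nodes n" for a b
    unfolding r'_def using rr that bar_nodes by (metis ratinf_min)
  define E where "E a b = (if a = b then 0 else (\<infinity>::ereal))" for a b :: nat
  have cE: "cl n E" unfolding cl_def E_def by auto
  have rE: "\<forall>a\<in>nodes n. \<forall>b\<in>nodes n. ratinf (E a b)" unfolding E_def ratinf_def by auto
  have zE: "\<forall>a\<in>nodes n. \<forall>b\<in>nodes n. ereal (pi_node a z - pi_node b z) \<le> E a b" unfolding E_def by auto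
  define L where "L = map (\<lambda>(a,b). (a,b, r' a b)) (List.product [0..<2*n] [0..<2*n]) @
     [(j0, i0, ereal (-q)), (bar i0, bar j0, ereal (-q))]"
  have setL: "set L = (\<lambda>(a,b). (a,b, r' a b)) ` (nodes n \<times> nodes n) \<union> {(j0, i0, ereal (-q)), (bar i0, bar j0, ereal (-q))}"
    unfolding L_def nodes_def by auto
  have Lok: "\<forall>(s,t,c)\<in>set L. s\<in>nodes n \<and> t \<in> nodes n \<and> ratinf c \<and> ereal (pi_node s z - pi_node t z) \<le> c"
    unfolding setL using i0 j0 bar_nodes[OF i0] bar_nodes[OF j0] rr' zr' q vd
    by (auto simp: ratinf_def d0_def pi_bar)
  define u where "u = addall E L"
  have U: "cl n u \<and> (\<forall>a\<in>nodes n. \<forall>b\<in>nodes n. ratinf (u a b)) \<and> (\<forall>(s,t,c)\<in>set L. u s t \<le> c)"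
    using addall[OF cE rE zE Lok] unfolding u_def by blast
  obtain y where y: "y \<in> Rn n" and H: "\<forall>a\<in>nodes n. \<forall>b\<in>nodes n. \<forall>c1 c2. u a b \<le> ereal c1 \<longrightarrow> u (bar b) (bar a) \<le> ereal c2
          \<longrightarrow> pi_node a y - pi_node b y \<le> (c1 + c2)/2"
    and yq: "\<forall>a\<in>nodes n. pi_node a y \<in> \<rat>"
    using point_from_cl[of n u] U by blast
  have ur': "u a b \<le> r' a b" if "a \<in> nodes n" "b \<in> nodes n" for a b
    using U that unfolding setL by fastforce
  have yr: "dg y a b \<le> r a b" if a: "a \<in> nodes n" and b: "b \<in> nodes n" for a b
  proof (cases "r' a b")
    case (real c)
    have "u a b \<le> ereal c" using ur'[OF a b] real by simp
    moreover have "u (bar b) (bar a) \<le> ereal c" using ur'[OF bar_nodes[OF b] bar_nodes[OF a]] real r'coh by simp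
    ultimately have "pi_node a y - pi_node b y \<le> c" using H a b by fastforce
    hence "dg y a b \<le> r' a b" using real by (simp add: dg_def)
    thus ?thesis unfolding r'_def by simp
  next
    case PInf
    moreover have "r' a b \<le> r a b" unfolding r'_def by simp
    ultimately have "r a b = \<infinity>" by simp
    thus ?thesis by simp
  next
    case MInf
    thus ?thesis using rr'[OF a b] by (simp add: ratinf_def)
  qed
  have "u j0 i0 \<le> ereal (-q)" "u (bar i0) (bar j0) \<le> ereal (-q)" using U unfolding setL by auto
  hence "pi_node j0 y - pi_node i0 y \<le> -q" using H i0 j0 by fastforce
  hence yi: "q \<le> pi_node i0 y - pi_node j0 y" by simp
  define s where "s = (\<lambda>a b. max (w1 a b) (dg y a b))"
  have ss: "scl n s" unfolding s_def by (rule scl_max[OF s1 scl_dg])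
  have rs: "\<forall>a\<in>nodes n. \<forall>b\<in>nodes n. ratinf (s a b)"
    using rw yq unfolding s_def dg_def ratinf_def by (auto simp: max_def intro: Rats_diff)
  have os: "octagonal n s \<and> strongly_closed n s" by (rule oct_of_scl[OF ss rs])
  have gs: "graph_le n s r" unfolding graph_le_def s_def using rr yr by simp
  have "s i0 j0 \<le> S_closure n r i0 j0"
    unfolding S_closure_def using os gs by (intro SUP_upper) auto
  also have "\<dots> = ereal v" using SC i0 j0 v by simp
  finally have "dg y i0 j0 \<le> ereal v" unfolding s_def by simp
  thus False using yi q by (simp add: dg_def)
qed


definition pairarc :: "graph \<Rightarrow> nat \<Rightarrow> nat \<Rightarrow> real \<Rightarrow> graph" where
  "pairarc g i j a = addarc (addarc g j i (ereal (-a))) (bar i) (bar j) (ereal (-a))"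

lemma pair:
  assumes g: "cl n g" and i: "i \<in> nodes n" and j: "j \<in> nodes n"
    and c1: "ereal a \<le> g i j" and c2: "ereal a \<le> g (bar j) (bar i)"
    and c3: "ereal (a + a) \<le> g (bar j) j + g i (bar i)"
  shows "cl n (pairarc g i j a) \<and> (\<forall>x y. pairarc g i j a x y \<le> g x y) \<and>
     pairarc g i j a j i \<le> ereal (-a) \<and> pairarc g i j a (bar i) (bar j) \<le> ereal (-a)"
proof -
  define u1 where "u1 = addarc g j i (ereal (-a))"
  have "0 \<le> g i j + ereal (-a)" using ereal_shift[of 0 a "g i j"] c1 by (simp add: zero_ereal_def)
  hence cu1: "cl n u1" unfolding u1_def by (intro addarc_cl[OF g j i]) auto
  have A0: "ereal a \<le> (g (bar j) j + g i (bar i)) + ereal (-a)" by (rule ereal_shift[OF c3])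
  have "(g (bar j) j + g i (bar i)) + ereal (-a) = g (bar j) j + ereal (-a) + g i (bar i)"
    by (simp add: ac_simps)
  with A0 have A: "ereal a \<le> g (bar j) j + ereal (-a) + g i (bar i)" by simp
  have "ereal a \<le> u1 (bar j) (bar i)" using A c2 by (simp add: u1_def addarc_def)
  hence "0 \<le> u1 (bar j) (bar i) + ereal (-a)" using ereal_shift[of 0 a] by (simp add: zero_ereal_def)
  hence cu2: "cl n (pairarc g i j a)" unfolding pairarc_def u1_def[symmetric]
    by (intro addarc_cl[OF cu1 bar_nodes[OF i] bar_nodes[OF j]]) auto
  have le: "\<forall>x y. pairarc g i j a x y \<le> g x y"
    unfolding pairarc_def by (meson addarc_le order_trans)
  have "pairarc g i j a j i \<le> ereal (-a)" using addarc_st[OF g j i, of "ereal (-a)"]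
    addarc_le[of u1 "bar i" "bar j" "ereal (-a)" j i]
    unfolding pairarc_def u1_def by simp
  moreover have "pairarc g i j a (bar i) (bar j) \<le> ereal (-a)" unfolding pairarc_def u1_def[symmetric]
    by (rule addarc_st[OF cu1 bar_nodes[OF i] bar_nodes[OF j]])
  ultimately show ?thesis using cu2 le by blast
qed

definition mm :: "real \<Rightarrow> ereal \<Rightarrow> real \<Rightarrow> real" where
  "mm M A e = real_of_ereal (min A (ereal (e + M)))"

lemma mm_eq: "A \<noteq> -\<infinity> \<Longrightarrow> ereal e \<le> A \<Longrightarrow> 0 \<le> M \<Longrightarrow> ereal (mm M A e) = min A (ereal (e + M))"
  unfolding mm_def by (cases A) (auto simp: min_def)

lemma finit:
  assumes w: "cl n w" and z: "\<forall>x\<in>nodes n. \<forall>y\<in>nodes n. ereal (pi_node x z - pi_node y z) \<le> w x y"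
    and M: "0 \<le> M"
  shows "cl n (\<lambda>x y. ereal (mm M (w x y) (pi_node x z - pi_node y z))) \<and>
     (\<forall>x\<in>nodes n. \<forall>y\<in>nodes n. ereal (mm M (w x y) (pi_node x z - pi_node y z)) \<le> w x y)"
proof -
  define D where "D x y = ereal (pi_node x z - pi_node y z + M)" for x y
  have eq: "ereal (mm M (w x y) (pi_node x z - pi_node y z)) = min (w x y) (D x y)"
    if "x \<in> nodes n" "y \<in> nodes n" for x y
    unfolding D_def using w z that M by (intro mm_eq) (auto simp: cl_def)
  show ?thesis
    unfolding cl_def
  proof (intro conjI ballI)
    fix x assume x: "x \<in> nodes n"
    show "ereal (mm M (w x x) (pi_node x z - pi_node x z)) = 0"
      unfolding eq[OF x x] D_def using w x M by (simp add: cl_def)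
  next
    fix x y assume "x \<in> nodes n" "y \<in> nodes n"
    show "ereal (mm M (w x y) (pi_node x z - pi_node y z)) \<noteq> - \<infinity>" by simp
    show "ereal (mm M (w x y) (pi_node x z - pi_node y z)) \<le> w x y" unfolding eq[OF \<open>x\<in>nodes n\<close> \<open>y\<in>nodes n\<close>] by simp
  next
    fix x y v assume x: "x \<in> nodes n" and y: "y \<in> nodes n" and v: "v \<in> nodes n"
    show "ereal (mm M (w x y) (pi_node x z - pi_node y z)) \<le> ereal (mm M (w x v) (pi_node x z - pi_node v z)) + ereal (mm M (w v y) (pi_node v z - pi_node y z))"
      unfolding eq[OF x y] eq[OF x v] eq[OF v y]
    proof (rule le_min_plus)
      show "min (w x y) (D x y) \<le> w x v + w v y" using w x y v by (auto simp: cl_def intro: min.coboundedI1)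
    next
      have "ereal (pi_node x z - pi_node v z) + D v y \<le> w x v + D v y" using z x v by (intro add_right_mono) auto
      hence "D x y \<le> w x v + D v y" unfolding D_def by (simp add: algebra_simps)
      thus "min (w x y) (D x y) \<le> w x v + D v y" by (simp add: min.coboundedI2)
    next
      have "D x v + ereal (pi_node v z - pi_node y z) \<le> D x v + w v y" using z v y by (intro add_left_mono) auto
      hence "D x y \<le> D x v + w v y" unfolding D_def by (simp add: algebra_simps)
      thus "min (w x y) (D x y) \<le> D x v + w v y" by (simp add: min.coboundedI2)
    next
      have "D x y \<le> D x v + D v y" unfolding D_def using M by simp
      thus "min (w x y) (D x y) \<le> D x v + D v y" by (simp add: min.coboundedI2)
    qed
  qed
qed

lemma transfer:
  fixes A :: "nat \<Rightarrow> ereal" and e :: "nat \<Rightarrow> real"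
  assumes h: "\<forall>i<k. A i \<noteq> -\<infinity> \<and> ereal (e i) \<le> A i" and c: "ereal c \<le> (\<Sum>i<k. A i)"
    and M: "\<bar>c\<bar> + (\<Sum>i<k. \<bar>e i\<bar>) \<le> M"
  shows "c \<le> (\<Sum>i<k. mm M (A i) (e i))"
proof -
  have M0: "0 \<le> M" using M by (smt (verit) sum_nonneg abs_ge_zero)
  have meq: "ereal (mm M (A i) (e i)) = min (A i) (ereal (e i + M))" if "i < k" for i
    using h that M0 by (intro mm_eq) auto
  have ge: "e i \<le> mm M (A i) (e i)" if "i < k" for i
  proof -
    have "ereal (e i) \<le> min (A i) (ereal (e i + M))" using h that M0 by simp
    thus ?thesis using meq[OF that] by (metis ereal_less_eq(3))
  qed
  have sume: "- (\<Sum>i<k. \<bar>e i\<bar>) \<le> (\<Sum>i<k. e i)"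
    by (simp add: sum_negf[symmetric] sum_mono)
  show ?thesis
  proof (cases "\<exists>i0<k. \<not> A i0 \<le> ereal (e i0 + M)")
    case True
    then obtain i0 where i0: "i0 < k" and big: "\<not> A i0 \<le> ereal (e i0 + M)" by blast
    have "ereal (mm M (A i0) (e i0)) = ereal (e i0 + M)" using meq[OF i0] big by (simp add: min_def)
    hence m0: "mm M (A i0) (e i0) - e i0 = M" by simp
    have "mm M (A i0) (e i0) - e i0 \<le> (\<Sum>i<k. mm M (A i) (e i) - e i)"
      using i0 ge by (intro member_le_sum) auto
    hence "M \<le> (\<Sum>i<k. mm M (A i) (e i)) - (\<Sum>i<k. e i)" using m0 by (simp add: sum_subtractf)
    thus ?thesis using M sume by (smt (verit) abs_ge_self)
  next
    case False
    hence "A i = ereal (mm M (A i) (e i))" if "i < k" for i using meq[OF that] that by (simp add: min_def)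
    hence "(\<Sum>i<k. A i) = (\<Sum>i<k. ereal (mm M (A i) (e i)))" by (intro sum.cong) auto
    also have "\<dots> = ereal (\<Sum>i<k. mm M (A i) (e i))" by (simp add: sum_ereal)
    finally show ?thesis using c by simp
  qed
qed



lemma eps_ev:
  assumes "ereal r < t" and m: "0 \<le> m"
  shows "\<forall>\<^sub>F e in at_right (0::real). ereal (r + m * e) \<le> t"
proof (cases t)
  case (real s)
  hence rs: "r < s" using assms by simp
  show ?thesis unfolding eventually_at_right_field
  proof (intro exI[of _ "(s - r)/(m+1)"] conjI allI impI)
    show "0 < (s - r)/(m+1)" using rs m by simp
    fix e :: real assume e: "0 < e" "e < (s - r)/(m+1)"
    have "m * e \<le> (m+1) * e" using e by simp
    also have "(m+1) * e < s - r" using e m by (simp add: field_simps)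
    finally show "ereal (r + m * e) \<le> t" using real by simp
  qed
next
  case PInf thus ?thesis by simp
next
  case MInf thus ?thesis using assms by simp
qed

lemma ev_obtain:
  assumes "\<forall>\<^sub>F e in at_right (0::real). P e"
  obtains e where "0 < e" "P e"
proof -
  obtain b where b: "0 < b" "\<forall>y>0. y < b \<longrightarrow> P y" using assms unfolding eventually_at_right_field by blast
  show ?thesis using b by (intro that[of "b/2"]) auto
qed

lemma Dlem:
  assumes "2 * y \<le> p + q" "ereal c \<le> x + (y::ereal)"
  shows "ereal (2*c) \<le> p + q + x + x"
proof -
  have "ereal (2*c) = ereal c + ereal c" by simp
  also have "\<dots> \<le> (x + y) + (x + y)" by (rule add_mono[OF assms(2) assms(2)])
  also have "\<dots> = x + x + (y + y)" by (simp add: ac_simps)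
  also have "\<dots> = x + x + 2 * y" by (simp only: two_times)
  also have "\<dots> \<le> x + x + (p + q)" using assms(1) by (rule add_left_mono)
  finally show ?thesis by (simp add: ac_simps)
qed

lemma D1lem:
  assumes "2 * y \<le> p + q" "ereal c \<le> (y::ereal)"
  shows "ereal (2*c) \<le> p + q"
proof -
  have "ereal (2*c) = ereal c + ereal c" by simp
  also have "\<dots> \<le> y + y" by (rule add_mono[OF assms(2) assms(2)])
  also have "\<dots> = 2 * y" by (rule two_times[symmetric])
  finally show ?thesis using assms(1) by simp
qed

lemma tr1:
  assumes "A1 \<noteq> -\<infinity>" "ereal e1 \<le> A1" "ereal c \<le> A1" "\<bar>c\<bar> + \<bar>e1\<bar> \<le> M"
  shows "c \<le> mm M A1 e1"
  using transfer[of 1 "\<lambda>_. A1" "\<lambda>_. e1" c M] assms by simp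

lemma tr2:
  assumes "A1 \<noteq> -\<infinity>" "A2 \<noteq> -\<infinity>" "ereal e1 \<le> A1" "ereal e2 \<le> A2" "ereal c \<le> A1 + A2"
    "\<bar>c\<bar> + \<bar>e1\<bar> + \<bar>e2\<bar> \<le> M"
  shows "c \<le> mm M A1 e1 + mm M A2 e2"
  using transfer[of 2 "\<lambda>i. [A1, A2] ! i" "\<lambda>i. [e1, e2] ! i" c M] assms
  by (simp add: eval_nat_numeral less_Suc_eq)

lemma tr3:
  assumes "A1 \<noteq> -\<infinity>" "A2 \<noteq> -\<infinity>" "A3 \<noteq> -\<infinity>" "ereal e1 \<le> A1" "ereal e2 \<le> A2" "ereal e3 \<le> A3"
    "ereal c \<le> A1 + A2 + A3" "\<bar>c\<bar> + \<bar>e1\<bar> + \<bar>e2\<bar> + \<bar>e3\<bar> \<le> M"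
  shows "c \<le> mm M A1 e1 + mm M A2 e2 + mm M A3 e3"
  using transfer[of 3 "\<lambda>i. [A1, A2, A3] ! i" "\<lambda>i. [e1, e2, e3] ! i" c M] assms
  by (simp add: eval_nat_numeral less_Suc_eq ac_simps)

lemma tr4:
  assumes "A1 \<noteq> -\<infinity>" "A2 \<noteq> -\<infinity>" "A3 \<noteq> -\<infinity>" "A4 \<noteq> -\<infinity>"
    "ereal e1 \<le> A1" "ereal e2 \<le> A2" "ereal e3 \<le> A3" "ereal e4 \<le> A4"
    "ereal c \<le> A1 + A2 + A3 + A4" "\<bar>c\<bar> + \<bar>e1\<bar> + \<bar>e2\<bar> + \<bar>e3\<bar> + \<bar>e4\<bar> \<le> M"
  shows "c \<le> mm M A1 e1 + mm M A2 e2 + mm M A3 e3 + mm M A4 e4"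
  using transfer[of 4 "\<lambda>i. [A1, A2, A3, A4] ! i" "\<lambda>i. [e1, e2, e3, e4] ! i" c M] assms
  by (simp add: eval_nat_numeral less_Suc_eq ac_simps)


lemma min_ereal2: "min (ereal x) (ereal y) = ereal (min x y)" by (simp add: min_def)

lemma backward:
  fixes w1 w2 :: graph
  defines "w \<equiv> \<lambda>i j. max (w1 i j) (w2 i j)"
  assumes s1: "scl n w1" and s2: "scl n w2" and z: "z \<in> gamma n w1"
    and i: "i \<in> nodes n" and j: "j \<in> nodes n" and k: "k \<in> nodes n" and l: "l \<in> nodes n"
    and a0: "w1 i j = ereal a0" and b0: "w2 k l = ereal b0"
    and h1a: "w1 i j < w2 i j" and h1b: "w2 k l < w1 k l"
    and h2a: "w1 i j + w2 k l < w i l + w k j"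
    and h2b: "w1 i j + w2 k l < w i (bar k) + w (bar j) l"
    and h3a: "2 * w1 i j + w2 k l < w i l + w i (bar k) + w (bar j) j"
    and h3b: "2 * w1 i j + w2 k l < w k j + w (bar j) l + w i (bar i)"
    and h4a: "w1 i j + 2 * w2 k l < w i l + w (bar j) l + w k (bar k)"
    and h4b: "w1 i j + 2 * w2 k l < w k j + w i (bar k) + w (bar l) l"
  shows "oct_hull n (gamma n w1 \<union> gamma n w2) \<noteq> gamma n w1 \<union> gamma n w2"
proof -
  have sw: "scl n w" unfolding w_def by (rule scl_max[OF s1 s2])
  have wcl: "cl n w" and wcoh: "coh n w" and wstr: "\<And>x y. x \<in> nodes n \<Longrightarrow> y \<in> nodes n \<Longrightarrow> 2 * w x y \<le> w x (bar x) + w (bar y) y"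
    using sw by (auto simp: scl_def)
  have wn: "\<And>x y. x \<in> nodes n \<Longrightarrow> y \<in> nodes n \<Longrightarrow> w x y \<noteq> -\<infinity>" using wcl by (auto simp: cl_def)
  have bi: "bar i \<in> nodes n" and bj: "bar j \<in> nodes n" and bk: "bar k \<in> nodes n" and bl: "bar l \<in> nodes n"
    using i j k l by (auto intro: bar_nodes)
  have e1a: "ereal a0 < w i j" using h1a a0 unfolding w_def by (simp add: less_max_iff_disj)
  have e1b: "ereal b0 < w k l" using h1b b0 unfolding w_def by (simp add: less_max_iff_disj)
  have e2a: "ereal (a0 + b0) < w i l + w k j" using h2a a0 b0 by simp
  have e2b: "ereal (a0 + b0) < w i (bar k) + w (bar j) l" using h2b a0 b0 by simp
  have e3a: "ereal (2*a0 + b0) < w i l + w i (bar k) + w (bar j) j" using h3a a0 b0 by simp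
  have e3b: "ereal (2*a0 + b0) < w k j + w (bar j) l + w i (bar i)" using h3b a0 b0 by simp
  have e4a: "ereal (a0 + 2*b0) < w i l + w (bar j) l + w k (bar k)" using h4a a0 b0 by simp
  have e4b: "ereal (a0 + 2*b0) < w k j + w i (bar k) + w (bar l) l" using h4b a0 b0 by simp
  have "\<forall>\<^sub>F e in at_right (0::real). ereal (a0 + 1*e) \<le> w i j \<and> ereal (b0 + 1*e) \<le> w k l \<and>
     ereal (a0 + b0 + 2*e) \<le> w i l + w k j \<and> ereal (a0 + b0 + 2*e) \<le> w i (bar k) + w (bar j) l \<and>
     ereal (2*a0 + b0 + 3*e) \<le> w i l + w i (bar k) + w (bar j) j \<and>
     ereal (2*a0 + b0 + 3*e) \<le> w k j + w (bar j) l + w i (bar i) \<and>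
     ereal (a0 + 2*b0 + 3*e) \<le> w i l + w (bar j) l + w k (bar k) \<and>
     ereal (a0 + 2*b0 + 3*e) \<le> w k j + w i (bar k) + w (bar l) l"
    by (intro eventually_conj eps_ev e1a e1b e2a e2b e3a e3b e4a e4b) auto
  then obtain e where e: "0 < e" and E: "ereal (a0 + 1*e) \<le> w i j \<and> ereal (b0 + 1*e) \<le> w k l \<and>
     ereal (a0 + b0 + 2*e) \<le> w i l + w k j \<and> ereal (a0 + b0 + 2*e) \<le> w i (bar k) + w (bar j) l \<and>
     ereal (2*a0 + b0 + 3*e) \<le> w i l + w i (bar k) + w (bar j) j \<and>
     ereal (2*a0 + b0 + 3*e) \<le> w k j + w (bar j) l + w i (bar i) \<and>
     ereal (a0 + 2*b0 + 3*e) \<le> w i l + w (bar j) l + w k (bar k) \<and>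
     ereal (a0 + 2*b0 + 3*e) \<le> w k j + w i (bar k) + w (bar l) l"
    by (rule ev_obtain)
  define a where "a = a0 + e"
  define b where "b = b0 + e"
  have N1: "ereal a \<le> w i j" using E by (simp add: a_def)
  have N1b: "ereal b \<le> w k l" using E by (simp add: b_def)
  have N2a: "ereal (a + b) \<le> w i l + w k j" using E by (simp add: a_def b_def algebra_simps)
  have N2b: "ereal (a + b) \<le> w i (bar k) + w (bar j) l" using E by (simp add: a_def b_def algebra_simps)
  have N3a: "ereal (2*a + b) \<le> w i l + w i (bar k) + w (bar j) j" using E by (simp add: a_def b_def algebra_simps)
  have N3b: "ereal (2*a + b) \<le> w k j + w (bar j) l + w i (bar i)" using E by (simp add: a_def b_def algebra_simps)
  have N4a: "ereal (a + 2*b) \<le> w i l + w (bar j) l + w k (bar k)" using E by (simp add: a_def b_def algebra_simps)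
  have N4b: "ereal (a + 2*b) \<le> w k j + w i (bar k) + w (bar l) l" using E by (simp add: a_def b_def algebra_simps)
  have D1: "ereal (2*a) \<le> w i (bar i) + w (bar j) j" by (rule D1lem[OF wstr[OF i j] N1])
  have D2: "ereal (2*b) \<le> w k (bar k) + w (bar l) l" by (rule D1lem[OF wstr[OF k l] N1b])
  have D3: "ereal (2*(a+b)) \<le> w k (bar k) + w (bar j) j + w i l + w i l"
    by (rule Dlem[OF wstr[OF k j] N2a])
  have N2b': "ereal (a + b) \<le> w (bar j) l + w i (bar k)" using N2b by (simp add: add.commute)
  have D4: "ereal (2*(a+b)) \<le> w i (bar i) + w k (bar k) + w (bar j) l + w (bar j) l"
    using Dlem[OF wstr[OF i bk] N2b'] by simp
  have D5: "ereal (2*(a+b)) \<le> w (bar j) j + w (bar l) l + w i (bar k) + w i (bar k)"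
    using Dlem[OF wstr[OF bj l] N2b] by simp
  have N2a': "ereal (a + b) \<le> w k j + w i l" using N2a by (simp add: add.commute)
  have D6: "ereal (2*(a+b)) \<le> w i (bar i) + w (bar l) l + w k j + w k j"
    by (rule Dlem[OF wstr[OF i l] N2a'])
  define dz where "dz x y = pi_node x z - pi_node y z" for x y
  define S where "S = (\<Sum>x\<in>nodes n. \<Sum>y\<in>nodes n. \<bar>dz x y\<bar>)"
  define M where "M = 1 + 4 * (\<bar>a\<bar> + \<bar>b\<bar> + S)"
  have finN: "finite (nodes n)" by (simp add: nodes_def)
  have eS: "\<bar>dz x y\<bar> \<le> S" if "x \<in> nodes n" "y \<in> nodes n" for x y
  proof -
    have "\<bar>dz x y\<bar> \<le> (\<Sum>y\<in>nodes n. \<bar>dz x y\<bar>)" using that finN by (intro member_le_sum) auto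
    also have "\<dots> \<le> S" unfolding S_def using that finN by (intro member_le_sum sum_nonneg) auto
    finally show ?thesis .
  qed
  have S0: "0 \<le> S" unfolding S_def by (intro sum_nonneg) auto
  have zw: "ereal (dz x y) \<le> w x y" if "x \<in> nodes n" "y \<in> nodes n" for x y
    using z that unfolding gamma_def w_def dz_def by (auto intro: max.coboundedI1)
  define Wr where "Wr x y = mm M (w x y) (dz x y)" for x y
  have ab: "\<bar>a\<bar> \<le> 2*\<bar>a\<bar> + 2*\<bar>b\<bar>" "\<bar>b\<bar> \<le> 2*\<bar>a\<bar> + 2*\<bar>b\<bar>"
    "\<bar>a + b\<bar> \<le> 2*\<bar>a\<bar> + 2*\<bar>b\<bar>" "\<bar>2*a + b\<bar> \<le> 2*\<bar>a\<bar> + 2*\<bar>b\<bar>"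
    "\<bar>a + 2*b\<bar> \<le> 2*\<bar>a\<bar> + 2*\<bar>b\<bar>" "\<bar>2*a\<bar> \<le> 2*\<bar>a\<bar> + 2*\<bar>b\<bar>"
    "\<bar>2*b\<bar> \<le> 2*\<bar>a\<bar> + 2*\<bar>b\<bar>" "\<bar>2*(a+b)\<bar> \<le> 2*\<bar>a\<bar> + 2*\<bar>b\<bar>"
    by (auto simp: abs_if)
  have K0: "0 \<le> 2*\<bar>a\<bar> + 2*\<bar>b\<bar>" by simp
  have Mb1: "\<bar>c\<bar> + \<bar>e1\<bar> \<le> M" if "\<bar>c\<bar> \<le> 2*\<bar>a\<bar> + 2*\<bar>b\<bar>" "\<bar>e1\<bar> \<le> S" for c e1
    using that S0 abs_ge_zero[of a] abs_ge_zero[of b] unfolding M_def by (smt (verit))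
  have Mb2: "\<bar>c\<bar> + \<bar>e1\<bar> + \<bar>e2\<bar> \<le> M" if "\<bar>c\<bar> \<le> 2*\<bar>a\<bar> + 2*\<bar>b\<bar>" "\<bar>e1\<bar> \<le> S" "\<bar>e2\<bar> \<le> S" for c e1 e2
    using that S0 abs_ge_zero[of a] abs_ge_zero[of b] unfolding M_def by (smt (verit))
  have Mb3: "\<bar>c\<bar> + \<bar>e1\<bar> + \<bar>e2\<bar> + \<bar>e3\<bar> \<le> M" if "\<bar>c\<bar> \<le> 2*\<bar>a\<bar> + 2*\<bar>b\<bar>" "\<bar>e1\<bar> \<le> S" "\<bar>e2\<bar> \<le> S" "\<bar>e3\<bar> \<le> S" for c e1 e2 e3
    using that S0 abs_ge_zero[of a] abs_ge_zero[of b] unfolding M_def by (smt (verit))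
  have Mb4: "\<bar>c\<bar> + \<bar>e1\<bar> + \<bar>e2\<bar> + \<bar>e3\<bar> + \<bar>e4\<bar> \<le> M" if "\<bar>c\<bar> \<le> 2*\<bar>a\<bar> + 2*\<bar>b\<bar>" "\<bar>e1\<bar> \<le> S" "\<bar>e2\<bar> \<le> S" "\<bar>e3\<bar> \<le> S" "\<bar>e4\<bar> \<le> S" for c e1 e2 e3 e4
    using that S0 abs_ge_zero[of a] abs_ge_zero[of b] unfolding M_def by (smt (verit))
  note eSs = eS[OF i j] eS[OF k l] eS[OF i l] eS[OF k j] eS[OF i bk] eS[OF bj l] eS[OF bj j] eS[OF i bi]
    eS[OF k bk] eS[OF bl l]
  note zws = zw[OF i j] zw[OF k l] zw[OF i l] zw[OF k j] zw[OF i bk] zw[OF bj l] zw[OF bj j] zw[OF i bi]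
    zw[OF k bk] zw[OF bl l]
  note wns = wn[OF i j] wn[OF k l] wn[OF i l] wn[OF k j] wn[OF i bk] wn[OF bj l] wn[OF bj j] wn[OF i bi]
    wn[OF k bk] wn[OF bl l]
  have RN1: "a \<le> Wr i j" unfolding Wr_def
    by (rule tr1[OF wns(1) zws(1) N1 Mb1[OF ab(1) eSs(1)]])
  have RN1b: "b \<le> Wr k l" unfolding Wr_def
    by (rule tr1[OF wns(2) zws(2) N1b Mb1[OF ab(2) eSs(2)]])
  have RN2a: "a + b \<le> Wr i l + Wr k j" unfolding Wr_def
    by (rule tr2[OF wns(3,4) zws(3,4) N2a Mb2[OF ab(3) eSs(3) eSs(4)]])
  have RN2b: "a + b \<le> Wr i (bar k) + Wr (bar j) l" unfolding Wr_def
    by (rule tr2[OF wns(5,6) zws(5,6) N2b Mb2[OF ab(3) eSs(5) eSs(6)]])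
  have RN3a: "2*a + b \<le> Wr i l + Wr i (bar k) + Wr (bar j) j" unfolding Wr_def
    by (rule tr3[OF wns(3,5,7) zws(3,5,7) N3a Mb3[OF ab(4) eSs(3) eSs(5) eSs(7)]])
  have RN3b: "2*a + b \<le> Wr k j + Wr (bar j) l + Wr i (bar i)" unfolding Wr_def
    by (rule tr3[OF wns(4,6,8) zws(4,6,8) N3b Mb3[OF ab(4) eSs(4) eSs(6) eSs(8)]])
  have RN4a: "a + 2*b \<le> Wr i l + Wr (bar j) l + Wr k (bar k)" unfolding Wr_def
    by (rule tr3[OF wns(3,6,9) zws(3,6,9) N4a Mb3[OF ab(5) eSs(3) eSs(6) eSs(9)]])
  have RN4b: "a + 2*b \<le> Wr k j + Wr i (bar k) + Wr (bar l) l" unfolding Wr_def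
    by (rule tr3[OF wns(4,5,10) zws(4,5,10) N4b Mb3[OF ab(5) eSs(4) eSs(5) eSs(10)]])
  have RD1: "2*a \<le> Wr i (bar i) + Wr (bar j) j" unfolding Wr_def
    by (rule tr2[OF wns(8,7) zws(8,7) D1 Mb2[OF ab(6) eSs(8) eSs(7)]])
  have RD2: "2*b \<le> Wr k (bar k) + Wr (bar l) l" unfolding Wr_def
    by (rule tr2[OF wns(9,10) zws(9,10) D2 Mb2[OF ab(7) eSs(9) eSs(10)]])
  have RD3: "2*(a+b) \<le> Wr k (bar k) + Wr (bar j) j + Wr i l + Wr i l" unfolding Wr_def
    by (rule tr4[OF wns(9,7,3,3) zws(9,7,3,3) D3 Mb4[OF ab(8) eSs(9) eSs(7) eSs(3) eSs(3)]])
  have RD4: "2*(a+b) \<le> Wr i (bar i) + Wr k (bar k) + Wr (bar j) l + Wr (bar j) l" unfolding Wr_def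
    by (rule tr4[OF wns(8,9,6,6) zws(8,9,6,6) D4 Mb4[OF ab(8) eSs(8) eSs(9) eSs(6) eSs(6)]])
  have RD5: "2*(a+b) \<le> Wr (bar j) j + Wr (bar l) l + Wr i (bar k) + Wr i (bar k)" unfolding Wr_def
    by (rule tr4[OF wns(7,10,5,5) zws(7,10,5,5) D5 Mb4[OF ab(8) eSs(7) eSs(10) eSs(5) eSs(5)]])
  have RD6: "2*(a+b) \<le> Wr i (bar i) + Wr (bar l) l + Wr k j + Wr k j" unfolding Wr_def
    by (rule tr4[OF wns(8,10,4,4) zws(8,10,4,4) D6 Mb4[OF ab(8) eSs(8) eSs(10) eSs(4) eSs(4)]])
  have Wcoh: "Wr (bar y) (bar x) = Wr x y" if "x \<in> nodes n" "y \<in> nodes n" for x y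
  proof -
    have "w (bar y) (bar x) = w x y" using wcoh that unfolding coh_def by metis
    moreover have "dz (bar y) (bar x) = dz x y" unfolding dz_def by (simp add: pi_bar)
    ultimately show ?thesis unfolding Wr_def by simp
  qed
  define W where "W x y = ereal (Wr x y)" for x y
  have M0: "0 \<le> M" unfolding M_def using S0 by simp
  have Weq: "W = (\<lambda>x y. ereal (mm M (w x y) (pi_node x z - pi_node y z)))"
    by (simp add: W_def Wr_def dz_def fun_eq_iff)
  have fW: "cl n W \<and> (\<forall>x\<in>nodes n. \<forall>y\<in>nodes n. W x y \<le> w x y)"
    unfolding Weq using zw unfolding dz_def by (intro finit[OF wcl _ M0]) auto
  define u2 where "u2 = pairarc W i j a"
  have PA: "cl n u2 \<and> (\<forall>x y. u2 x y \<le> W x y) \<and> u2 j i \<le> ereal (-a) \<and> u2 (bar i) (bar j) \<le> ereal (-a)"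
    unfolding u2_def
  proof (rule pair[OF conjunct1[OF fW] i j])
    show "ereal a \<le> W i j" using RN1 by (simp add: W_def)
    show "ereal a \<le> W (bar j) (bar i)" using RN1 Wcoh[OF i j] by (simp add: W_def)
    show "ereal (a + a) \<le> W (bar j) j + W i (bar i)" using RD1 by (simp add: W_def)
  qed
  note cohs = Wcoh[OF i bk] Wcoh[OF k l] Wcoh[OF bj l] Wcoh[OF i l] Wcoh[OF k j]
  note cohs' = cohs[simplified]
  have B1: "ereal b \<le> u2 k l"
    unfolding u2_def pairarc_def addarc_def W_def
    apply (simp only: min_ereal2 plus_ereal.simps(1) ereal_less_eq(3) min_add_distrib_left min_add_distrib_right min.bounded_iff)
    apply (intro conjI)
    apply (use RN1 RN1b RN2a RN2b RN3a RN3b RN4a RN4b RD1 RD2 RD3 RD4 RD5 RD6 cohs' in \<open>smt (verit)\<close>)+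
    done
  have B2: "ereal b \<le> u2 (bar l) (bar k)"
    unfolding u2_def pairarc_def addarc_def W_def
    apply (simp only: min_ereal2 plus_ereal.simps(1) ereal_less_eq(3) min_add_distrib_left min_add_distrib_right min.bounded_iff)
    apply (intro conjI)
    apply (use RN1 RN1b RN2a RN2b RN3a RN3b RN4a RN4b RD1 RD2 RD3 RD4 RD5 RD6 cohs' in \<open>smt (verit)\<close>)+
    done
  have B3: "ereal (b + b) \<le> u2 (bar l) l + u2 k (bar k)"
    unfolding u2_def pairarc_def addarc_def W_def
    apply (simp only: min_ereal2 plus_ereal.simps(1) ereal_less_eq(3) min_add_distrib_left min_add_distrib_right min.bounded_iff)
    apply (intro conjI)
    apply (use RN1 RN1b RN2a RN2b RN3a RN3b RN4a RN4b RD1 RD2 RD3 RD4 RD5 RD6 cohs' in \<open>smt (verit)\<close>)+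
    done
  define u4 where "u4 = pairarc u2 k l b"
  have PB: "cl n u4 \<and> (\<forall>x y. u4 x y \<le> u2 x y) \<and> u4 l k \<le> ereal (-b) \<and> u4 (bar k) (bar l) \<le> ereal (-b)"
    unfolding u4_def by (rule pair[OF conjunct1[OF PA] k l B1 B2 B3])
  have le4: "\<forall>x\<in>nodes n. \<forall>y\<in>nodes n. u4 x y \<le> w x y"
    using PA PB fW by (meson order_trans)
  obtain p where p: "p \<in> gamma n w" and H: "\<forall>x\<in>nodes n. \<forall>y\<in>nodes n. \<forall>c. u4 x y \<le> ereal c \<longrightarrow> u4 (bar y) (bar x) \<le> ereal c
       \<longrightarrow> pi_node x p - pi_node y p \<le> c"
    using point_in_gamma[OF conjunct1[OF PB] le4 wcoh] by blast
  have "u4 j i \<le> ereal (-a)" "u4 (bar i) (bar j) \<le> ereal (-a)" using PA PB by (meson order_trans)+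
  hence pij: "pi_node j p - pi_node i p \<le> -a" using H i j by auto
  have "pi_node l p - pi_node k p \<le> -b" using H k l PB by auto
  have "p \<in> oct_hull n (gamma n w1 \<union> gamma n w2)" using gamma_hull[OF s1 s2] p unfolding w_def by blast
  moreover have "p \<notin> gamma n w1"
  proof
    assume "p \<in> gamma n w1"
    hence "ereal (pi_node i p - pi_node j p) \<le> w1 i j" using i j by (simp add: gamma_def)
    thus False using a0 pij e a_def by simp
  qed
  moreover have "p \<notin> gamma n w2"
  proof
    assume "p \<in> gamma n w2"
    hence "ereal (pi_node k p - pi_node l p) \<le> w2 k l" using k l by (simp add: gamma_def)
    thus False using b0 \<open>pi_node l p - pi_node k p \<le> -b\<close> e b_def by simp
  qed
  ultimately show ?thesis by blast
qed


lemma ch1: "ereal x \<le> X \<Longrightarrow> c < x \<Longrightarrow> ereal c < X"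
  by (meson ereal_less_eq(3) less_le_trans ereal_less(2) less_ereal.simps(1))

lemma ch2: "ereal x \<le> X \<Longrightarrow> ereal y \<le> Y \<Longrightarrow> c < x + y \<Longrightarrow> ereal c < X + Y"
proof -
  assume h: "ereal x \<le> X" "ereal y \<le> Y" "c < x + y"
  have "ereal (x + y) \<le> X + Y" using add_mono[OF h(1) h(2)] by simp
  thus ?thesis using h(3) by (rule ch1)
qed

lemma ch3: "ereal x \<le> X \<Longrightarrow> ereal y \<le> Y \<Longrightarrow> ereal z \<le> Z \<Longrightarrow> c < x + y + z \<Longrightarrow> ereal c < X + Y + Z"
proof -
  assume h: "ereal x \<le> X" "ereal y \<le> Y" "ereal z \<le> Z" "c < x + y + z"
  have "ereal (x + y + z) \<le> X + Y + Z" using add_mono[OF add_mono[OF h(1) h(2)] h(3)] by simp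
  thus ?thesis using h(4) by (rule ch1)
qed

lemma forward:
  fixes w1 w2 r1 r2 :: graph
  defines "w \<equiv> \<lambda>i j. max (w1 i j) (w2 i j)"
  assumes s1: "scl n w1" and s2: "scl n w2"
    and rw1: "\<forall>i\<in>nodes n. \<forall>j\<in>nodes n. ratinf (w1 i j)" and rw2: "\<forall>i\<in>nodes n. \<forall>j\<in>nodes n. ratinf (w2 i j)"
    and sub1: "subgraph n r1 w1" and SC1: "\<forall>i\<in>nodes n. \<forall>j\<in>nodes n. S_closure n r1 i j = w1 i j"
    and sub2: "subgraph n r2 w2" and SC2: "\<forall>i\<in>nodes n. \<forall>j\<in>nodes n. S_closure n r2 i j = w2 i j"
    and ne: "oct_hull n (gamma n w1 \<union> gamma n w2) \<noteq> gamma n w1 \<union> gamma n w2"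
  shows "\<exists>i\<in>nodes n. \<exists>j\<in>nodes n. \<exists>k\<in>nodes n. \<exists>l\<in>nodes n.
       is_arc r1 i j \<and> is_arc r2 k l \<and>
       w1 i j < w2 i j \<and>
       w2 k l < w1 k l \<and>
       w1 i j + w2 k l < w i l + w k j \<and>
       w1 i j + w2 k l < w i (bar k) + w (bar j) l \<and>
       2 * w1 i j + w2 k l < w i l + w i (bar k) + w (bar j) j \<and>
       2 * w1 i j + w2 k l < w k j + w (bar j) l + w i (bar i) \<and>
       w1 i j + 2 * w2 k l < w i l + w (bar j) l + w k (bar k) \<and>
       w1 i j + 2 * w2 k l < w k j + w i (bar k) + w (bar l) l"
proof -
  have rw: "\<forall>i\<in>nodes n. \<forall>j\<in>nodes n. ratinf (w i j)" using rw1 rw2 unfolding w_def by (auto intro: ratinf_max)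
  have g1: "gamma n w1 \<subseteq> gamma n w" unfolding gamma_def w_def by (auto intro: max.coboundedI1 order_trans)
  have g2: "gamma n w2 \<subseteq> gamma n w" unfolding gamma_def w_def by (auto intro: max.coboundedI2 order_trans)
  have hs: "oct_hull n (gamma n w1 \<union> gamma n w2) \<subseteq> gamma n w"
    using gamma_shape[OF rw] g1 g2 by (intro hull_sub) auto
  obtain p where ph: "p \<in> oct_hull n (gamma n w1 \<union> gamma n w2)" and pn: "p \<notin> gamma n w1 \<union> gamma n w2"
    using ne sub_hull by blast
  have pw: "p \<in> gamma n w" using ph hs by blast
  have pR: "p \<in> Rn n" using pw by (simp add: gamma_def)
  have pd: "ereal (pi_node x p - pi_node y p) \<le> w x y" if "x \<in> nodes n" "y \<in> nodes n" for x y
    using pw that by (simp add: gamma_def)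
  have "p \<notin> gamma n r1" using gamma_r[OF s1 rw1 sub1 SC1] pn by blast
  then obtain i j where i: "i \<in> nodes n" and j: "j \<in> nodes n" and vij: "\<not> ereal (pi_node i p - pi_node j p) \<le> r1 i j"
    using pR unfolding gamma_def by auto
  have arc1: "is_arc r1 i j" using vij unfolding is_arc_def by auto
  hence r1w: "r1 i j = w1 i j" using sub1 i j unfolding subgraph_def by blast
  obtain A where A: "w1 i j = ereal A" using arc1 r1w s1 i j unfolding is_arc_def scl_def cl_def
    by (cases "w1 i j") auto
  have "p \<notin> gamma n r2" using gamma_r[OF s2 rw2 sub2 SC2] pn by blast
  then obtain k l where k: "k \<in> nodes n" and l: "l \<in> nodes n" and vkl: "\<not> ereal (pi_node k p - pi_node l p) \<le> r2 k l"
    using pR unfolding gamma_def by auto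
  have arc2: "is_arc r2 k l" using vkl unfolding is_arc_def by auto
  hence r2w: "r2 k l = w2 k l" using sub2 k l unfolding subgraph_def by blast
  obtain B where B: "w2 k l = ereal B" using arc2 r2w s2 k l unfolding is_arc_def scl_def cl_def
    by (cases "w2 k l") auto
  have AD: "A < pi_node i p - pi_node j p" using vij r1w A by simp
  have BD: "B < pi_node k p - pi_node l p" using vkl r2w B by simp
  have bi: "bar i \<in> nodes n" and bj: "bar j \<in> nodes n" and bk: "bar k \<in> nodes n" and bl: "bar l \<in> nodes n"
    using i j k l by (auto intro: bar_nodes)
  have c1a: "w1 i j < w2 i j"
  proof (rule ccontr)
    assume "\<not> w1 i j < w2 i j"
    hence "w i j = w1 i j" unfolding w_def by (simp add: max_def)
    thus False using pd[OF i j] AD A by simp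
  qed
  have c1b: "w2 k l < w1 k l"
  proof (rule ccontr)
    assume "\<not> w2 k l < w1 k l"
    hence "w k l = w2 k l" unfolding w_def by (simp add: max_def not_less)
    thus False using pd[OF k l] BD B by simp
  qed
  have c2a: "w1 i j + w2 k l < w i l + w k j"
    using ch2[OF pd[OF i l] pd[OF k j], of "A + B"] AD BD A B by simp
  have c2b: "w1 i j + w2 k l < w i (bar k) + w (bar j) l"
    using ch2[OF pd[OF i bk] pd[OF bj l], of "A + B"] AD BD A B by (simp add: pi_bar)
  have c3a: "2 * w1 i j + w2 k l < w i l + w i (bar k) + w (bar j) j"
    using ch3[OF pd[OF i l] pd[OF i bk] pd[OF bj j], of "2*A + B"] AD BD A B by (simp add: pi_bar)
  have c3b: "2 * w1 i j + w2 k l < w k j + w (bar j) l + w i (bar i)"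
    using ch3[OF pd[OF k j] pd[OF bj l] pd[OF i bi], of "2*A + B"] AD BD A B by (simp add: pi_bar)
  have c4a: "w1 i j + 2 * w2 k l < w i l + w (bar j) l + w k (bar k)"
    using ch3[OF pd[OF i l] pd[OF bj l] pd[OF k bk], of "A + 2*B"] AD BD A B by (simp add: pi_bar)
  have c4b: "w1 i j + 2 * w2 k l < w k j + w i (bar k) + w (bar l) l"
    using ch3[OF pd[OF k j] pd[OF i bk] pd[OF bl l], of "A + 2*B"] AD BD A B by (simp add: pi_bar)
  show ?thesis using i j k l arc1 arc2 c1a c1b c2a c2b c3a c3b c4a c4b by blast
qed


theorem theorem8:
  fixes n :: nat and oct1 oct2 :: "(nat \<Rightarrow> real) set" and w1 w2 r1 r2 :: graph
  assumes "oct_shape n oct1" and "oct_shape n oct2"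
    and "oct1 \<noteq> {}" and "oct2 \<noteq> {}"
    and "octagonal n w1" and "strongly_closed n w1" and "oct1 = gamma n w1"
    and "octagonal n w2" and "strongly_closed n w2" and "oct2 = gamma n w2"
    and "subgraph n r1 w1" and "\<forall>i\<in>nodes n. \<forall>j\<in>nodes n. S_closure n r1 i j = w1 i j"
    and "subgraph n r2 w2" and "\<forall>i\<in>nodes n. \<forall>j\<in>nodes n. S_closure n r2 i j = w2 i j"
    and "w = graph_join w1 w2"
  shows "oct_hull n (oct1 \<union> oct2) \<noteq> oct1 \<union> oct2 \<longleftrightarrow>
    (\<exists>i\<in>nodes n. \<exists>j\<in>nodes n. \<exists>k\<in>nodes n. \<exists>l\<in>nodes n.
       is_arc r1 i j \<and> is_arc r2 k l \<and>
       w1 i j < w2 i j \<and>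
       w2 k l < w1 k l \<and>
       w1 i j + w2 k l < w i l + w k j \<and>
       w1 i j + w2 k l < w i (bar k) + w (bar j) l \<and>
       2 * w1 i j + w2 k l < w i l + w i (bar k) + w (bar j) j \<and>
       2 * w1 i j + w2 k l < w k j + w (bar j) l + w i (bar i) \<and>
       w1 i j + 2 * w2 k l < w i l + w (bar j) l + w k (bar k) \<and>
       w1 i j + 2 * w2 k l < w k j + w i (bar k) + w (bar l) l)"
proof -
  note A = assms
  have s1: "scl n w1" by (rule scl_of[OF A(5) A(6)])
  have s2: "scl n w2" by (rule scl_of[OF A(8) A(9)])
  have rw1: "\<forall>i\<in>nodes n. \<forall>j\<in>nodes n. ratinf (w1 i j)"
    using A(5) unfolding octagonal_def ratinf_graph by blast
  have rw2: "\<forall>i\<in>nodes n. \<forall>j\<in>nodes n. ratinf (w2 i j)"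
    using A(8) unfolding octagonal_def ratinf_graph by blast
  have wj: "w = (\<lambda>i j. max (w1 i j) (w2 i j))" using A(15) by (simp add: graph_join_def)
  show ?thesis
  proof
    assume "oct_hull n (oct1 \<union> oct2) \<noteq> oct1 \<union> oct2"
    hence ne: "oct_hull n (gamma n w1 \<union> gamma n w2) \<noteq> gamma n w1 \<union> gamma n w2" using A(7) A(10) by simp
    show "\<exists>i\<in>nodes n. \<exists>j\<in>nodes n. \<exists>k\<in>nodes n. \<exists>l\<in>nodes n.
       is_arc r1 i j \<and> is_arc r2 k l \<and>
       w1 i j < w2 i j \<and>
       w2 k l < w1 k l \<and>
       w1 i j + w2 k l < w i l + w k j \<and>
       w1 i j + w2 k l < w i (bar k) + w (bar j) l \<and>
       2 * w1 i j + w2 k l < w i l + w i (bar k) + w (bar j) j \<and>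
       2 * w1 i j + w2 k l < w k j + w (bar j) l + w i (bar i) \<and>
       w1 i j + 2 * w2 k l < w i l + w (bar j) l + w k (bar k) \<and>
       w1 i j + 2 * w2 k l < w k j + w i (bar k) + w (bar l) l"
      unfolding wj by (rule forward[OF s1 s2 rw1 rw2 A(11) A(12) A(13) A(14) ne])
  next
    assume "\<exists>i\<in>nodes n. \<exists>j\<in>nodes n. \<exists>k\<in>nodes n. \<exists>l\<in>nodes n.
       is_arc r1 i j \<and> is_arc r2 k l \<and>
       w1 i j < w2 i j \<and>
       w2 k l < w1 k l \<and>
       w1 i j + w2 k l < w i l + w k j \<and>
       w1 i j + w2 k l < w i (bar k) + w (bar j) l \<and>
       2 * w1 i j + w2 k l < w i l + w i (bar k) + w (bar j) j \<and>
       2 * w1 i j + w2 k l < w k j + w (bar j) l + w i (bar i) \<and>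
       w1 i j + 2 * w2 k l < w i l + w (bar j) l + w k (bar k) \<and>
       w1 i j + 2 * w2 k l < w k j + w i (bar k) + w (bar l) l"
    then obtain i j k l where i: "i \<in> nodes n" and j: "j \<in> nodes n" and k: "k \<in> nodes n" and l: "l \<in> nodes n"
      and H: "is_arc r1 i j \<and> is_arc r2 k l \<and>
       w1 i j < w2 i j \<and>
       w2 k l < w1 k l \<and>
       w1 i j + w2 k l < w i l + w k j \<and>
       w1 i j + w2 k l < w i (bar k) + w (bar j) l \<and>
       2 * w1 i j + w2 k l < w i l + w i (bar k) + w (bar j) j \<and>
       2 * w1 i j + w2 k l < w k j + w (bar j) l + w i (bar i) \<and>
       w1 i j + 2 * w2 k l < w i l + w (bar j) l + w k (bar k) \<and>
       w1 i j + 2 * w2 k l < w k j + w i (bar k) + w (bar l) l" by blast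
    have r1w: "r1 i j = w1 i j" using H A(11) i j unfolding subgraph_def by blast
    obtain a0 where a0: "w1 i j = ereal a0" using H r1w s1 i j unfolding is_arc_def scl_def cl_def
      by (cases "w1 i j") auto
    have r2w: "r2 k l = w2 k l" using H A(13) k l unfolding subgraph_def by blast
    obtain b0 where b0: "w2 k l = ereal b0" using H r2w s2 k l unfolding is_arc_def scl_def cl_def
      by (cases "w2 k l") auto
    obtain z where z: "z \<in> gamma n w1" using A(3) A(7) by blast
    have "oct_hull n (gamma n w1 \<union> gamma n w2) \<noteq> gamma n w1 \<union> gamma n w2"
      using H unfolding wj by (intro backward[OF s1 s2 z i j k l a0 b0]) auto
    thus "oct_hull n (oct1 \<union> oct2) \<noteq> oct1 \<union> oct2" using A(7) A(10) by simp
  qed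
qed

end
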